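(* Let $f\in\mathcal{H}^2_{\omega}$ with $\|f\|=1$. Then the following are equivalent: (a) $f$ is $\mathcal{H}^2_{\omega}$-inner; (b) there exist a closed $z$-invariant subspace $\mathcal{M}\neq\{0\}$ of $\mathcal{H}^2_{\omega}$ and an integer $d\geq 0$ such that $z^k\in\mathcal{M}^{\perp}$ for all $0\leq k\leq d-1$, $z^d\notin\mathcal{M}^{\perp}$, and $f$ is a constant multiple of $P_{\mathcal{M}}(z^d)$, the orthogonal projection of $z^d$ onto $\mathcal{M}$.
   Context: Let $\omega=\{\omega_n\}_{n\geq 0}$ be a sequence of positive reals with $\omega_0=1$ and $\lim_{n\to\infty}\omega_{n+1}/\omega_n=1$. $\mathcal{H}^2_{\omega}$ is the Hilbert space of power series $f(z)=\sum_{n\ge0}a_nz^n$ with $\|f\|^2=\sum_{n\geq0}\omega_n|a_n|^2<\infty$ and inner product $\langle f,g\rangle=\sum_n\omega_na_n\overline{b_n}$ for $g=\sum b_nz^n$; its elements are holomorphic on the unit disk $\mathbb{D}$. A closed subspace $\mathcal{M}$ is $z$-invariant if $z\mathcal{M}\subset\mathcal{M}$. A function $f\in\mathcal{H}^2_{\omega}$ is $\mathcal{H}^2_{\omega}$-inner if $\|f\|=1$ and $\langle z^mf,f\rangle=0$ for all integers $m\geq1$. *)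

theory Defs
  imports "HOL-Analysis.Analysis"
begin

text \<open>Elements of H^2_omega are represented by their Taylor coefficient sequences
  a :: nat => complex, with f(z) = sum a_n z^n.\<close>

definition admissible_weight :: "(nat \<Rightarrow> real) \<Rightarrow> bool" where
  "admissible_weight \<omega> \<longleftrightarrow> (\<forall>n. \<omega> n > 0) \<and> \<omega> 0 = 1 \<and>
     (\<lambda>n. \<omega> (Suc n) / \<omega> n) \<longlonglongrightarrow> 1"

definition H2w :: "(nat \<Rightarrow> real) \<Rightarrow> (nat \<Rightarrow> complex) set" where
  "H2w \<omega> = {a. summable (\<lambda>n. \<omega> n * (cmod (a n))\<^sup>2)}"

definition winner :: "(nat \<Rightarrow> real) \<Rightarrow> (nat \<Rightarrow> complex) \<Rightarrow> (nat \<Rightarrow> complex) \<Rightarrow> complex" where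
  "winner \<omega> a b = (\<Sum>n. complex_of_real (\<omega> n) * a n * cnj (b n))"

definition wnorm :: "(nat \<Rightarrow> real) \<Rightarrow> (nat \<Rightarrow> complex) \<Rightarrow> real" where
  "wnorm \<omega> a = sqrt (\<Sum>n. \<omega> n * (cmod (a n))\<^sup>2)"

definition zmul :: "(nat \<Rightarrow> complex) \<Rightarrow> (nat \<Rightarrow> complex)" where
  "zmul a = (\<lambda>n. if n = 0 then 0 else a (n - 1))"

definition monom_z :: "nat \<Rightarrow> (nat \<Rightarrow> complex)" where
  "monom_z k = (\<lambda>n. if n = k then 1 else 0)"

definition closed_subspace :: "(nat \<Rightarrow> real) \<Rightarrow> (nat \<Rightarrow> complex) set \<Rightarrow> bool" where
  "closed_subspace \<omega> M \<longleftrightarrow>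
     M \<subseteq> H2w \<omega> \<and> (\<lambda>n. 0) \<in> M \<and>
     (\<forall>a\<in>M. \<forall>b\<in>M. (\<lambda>n. a n + b n) \<in> M) \<and>
     (\<forall>c::complex. \<forall>a\<in>M. (\<lambda>n. c * a n) \<in> M) \<and>
     (\<forall>g x. (\<forall>k. g k \<in> M) \<and> x \<in> H2w \<omega> \<and>
            (\<lambda>k. wnorm \<omega> (\<lambda>n. g k n - x n)) \<longlonglongrightarrow> 0 \<longrightarrow> x \<in> M)"

definition z_invariant :: "(nat \<Rightarrow> complex) set \<Rightarrow> bool" where
  "z_invariant M \<longleftrightarrow> (\<forall>a\<in>M. zmul a \<in> M)"

definition orth_compl :: "(nat \<Rightarrow> real) \<Rightarrow> (nat \<Rightarrow> complex) set \<Rightarrow> (nat \<Rightarrow> complex) set" where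
  "orth_compl \<omega> M = {a \<in> H2w \<omega>. \<forall>b\<in>M. winner \<omega> a b = 0}"

definition proj :: "(nat \<Rightarrow> real) \<Rightarrow> (nat \<Rightarrow> complex) set \<Rightarrow> (nat \<Rightarrow> complex) \<Rightarrow> (nat \<Rightarrow> complex)" where
  "proj \<omega> M x = (THE p. p \<in> M \<and> (\<lambda>n. x n - p n) \<in> orth_compl \<omega> M)"

definition H2w_inner :: "(nat \<Rightarrow> real) \<Rightarrow> (nat \<Rightarrow> complex) \<Rightarrow> bool" where
  "H2w_inner \<omega> f \<longleftrightarrow> f \<in> H2w \<omega> \<and> wnorm \<omega> f = 1 \<and>
     (\<forall>m::nat. m \<ge> 1 \<longrightarrow> winner \<omega> ((zmul ^^ m) f) f = 0)"

end

theory Submission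
  imports Defs
begin


lemma H2w_iff: "a \<in> H2w \<omega> \<longleftrightarrow> summable (\<lambda>n. \<omega> n * (cmod (a n))\<^sup>2)"
  by (simp add: H2w_def)

lemma prod_bound:
  fixes w :: real and x y :: complex
  assumes "w \<ge> 0"
  shows "norm (complex_of_real w * x * cnj y) \<le> (w * (cmod x)\<^sup>2 + w * (cmod y)\<^sup>2) / 2"
proof -
  have "norm (complex_of_real w * x * cnj y) = w * (cmod x * cmod y)"
    using assms by (simp add: norm_mult)
  also have "\<dots> \<le> w * (((cmod x)\<^sup>2 + (cmod y)\<^sup>2) / 2)"
    apply (rule mult_left_mono[OF _ assms])
    using sum_squares_bound[of "cmod x" "cmod y"] by (simp add: power2_eq_square algebra_simps)
  finally show ?thesis by (simp add: algebra_simps)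
qed

locale wt =
  fixes \<omega> :: "nat \<Rightarrow> real"
  assumes pos: "\<And>n. \<omega> n > 0"
begin

lemma nn: "\<omega> n \<ge> 0" using pos[of n] by simp

lemma summ_norm:
  assumes "a \<in> H2w \<omega>" "b \<in> H2w \<omega>"
  shows "summable (\<lambda>n. norm (complex_of_real (\<omega> n) * a n * cnj (b n)))"
proof (rule summable_comparison_test'[where N=0])
  show "summable (\<lambda>n. (\<omega> n * (cmod (a n))\<^sup>2 + \<omega> n * (cmod (b n))\<^sup>2) / 2)"
    using assms by (intro summable_divide summable_add) (auto simp: H2w_iff)
  show "norm (norm (complex_of_real (\<omega> n) * a n * cnj (b n)))
        \<le> (\<omega> n * (cmod (a n))\<^sup>2 + \<omega> n * (cmod (b n))\<^sup>2) / 2" for n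
    using prod_bound[OF nn] by simp
qed

lemma summ:
  assumes "a \<in> H2w \<omega>" "b \<in> H2w \<omega>"
  shows "summable (\<lambda>n. complex_of_real (\<omega> n) * a n * cnj (b n))"
  by (rule summable_norm_cancel[OF summ_norm[OF assms]])

lemma H2w_add:
  assumes "a \<in> H2w \<omega>" "b \<in> H2w \<omega>"
  shows "(\<lambda>n. a n + b n) \<in> H2w \<omega>"
  unfolding H2w_iff
proof (rule summable_comparison_test'[where N=0])
  show "summable (\<lambda>n. 2 * (\<omega> n * (cmod (a n))\<^sup>2) + 2 * (\<omega> n * (cmod (b n))\<^sup>2))"
    using assms by (intro summable_mult summable_add) (auto simp: H2w_iff)
  fix n
  have "(cmod (a n + b n))\<^sup>2 \<le> (cmod (a n) + cmod (b n))\<^sup>2"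
    by (simp add: norm_triangle_ineq power_mono)
  also have "\<dots> \<le> 2 * (cmod (a n))\<^sup>2 + 2 * (cmod (b n))\<^sup>2"
    using sum_squares_bound[of "cmod (a n)" "cmod (b n)"]
    by (simp add: power2_eq_square algebra_simps)
  finally have "\<omega> n * (cmod (a n + b n))\<^sup>2 \<le> \<omega> n * (2 * (cmod (a n))\<^sup>2 + 2 * (cmod (b n))\<^sup>2)"
    by (rule mult_left_mono[OF _ nn])
  then show "norm (\<omega> n * (cmod (a n + b n))\<^sup>2)
        \<le> 2 * (\<omega> n * (cmod (a n))\<^sup>2) + 2 * (\<omega> n * (cmod (b n))\<^sup>2)"
    using nn[of n] by (simp add: algebra_simps)
qed

lemma H2w_scale:
  assumes "a \<in> H2w \<omega>"
  shows "(\<lambda>n. c * a n) \<in> H2w \<omega>"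
proof -
  have "summable (\<lambda>n. (cmod c)\<^sup>2 * (\<omega> n * (cmod (a n))\<^sup>2))"
    using assms by (intro summable_mult) (auto simp: H2w_iff)
  then show ?thesis unfolding H2w_iff by (simp add: norm_mult power_mult_distrib algebra_simps)
qed

lemma H2w_diff:
  assumes "a \<in> H2w \<omega>" "b \<in> H2w \<omega>"
  shows "(\<lambda>n. a n - b n) \<in> H2w \<omega>"
  using H2w_add[OF assms(1) H2w_scale[OF assms(2), of "-1"]] by simp

lemma H2w_zero: "(\<lambda>n. 0) \<in> H2w \<omega>"
  by (simp add: H2w_iff)

lemma H2w_monom: "monom_z k \<in> H2w \<omega>"
proof -
  have "summable (\<lambda>n. if n = k then \<omega> n * (cmod (monom_z k n))\<^sup>2 else 0)" by simp
  then show ?thesis unfolding H2w_iff by (rule summable_cong[THEN iffD1, rotated]) (auto simp: monom_z_def)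
qed

lemma winner_add_left:
  assumes "a \<in> H2w \<omega>" "b \<in> H2w \<omega>" "c \<in> H2w \<omega>"
  shows "winner \<omega> (\<lambda>n. a n + b n) c = winner \<omega> a c + winner \<omega> b c"
  unfolding winner_def using suminf_add[OF summ[OF assms(1,3)] summ[OF assms(2,3)]]
  by (simp add: algebra_simps)

lemma winner_scale_left:
  assumes "a \<in> H2w \<omega>" "b \<in> H2w \<omega>"
  shows "winner \<omega> (\<lambda>n. k * a n) b = k * winner \<omega> a b"
  unfolding winner_def using suminf_mult[OF summ[OF assms], of k]
  by (simp add: algebra_simps)

lemma winner_diff_left:
  assumes "a \<in> H2w \<omega>" "b \<in> H2w \<omega>" "c \<in> H2w \<omega>"
  shows "winner \<omega> (\<lambda>n. a n - b n) c = winner \<omega> a c - winner \<omega> b c"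
  unfolding winner_def using suminf_diff[OF summ[OF assms(1,3)] summ[OF assms(2,3)]]
  by (simp add: algebra_simps)

lemma winner_cnj:
  assumes "a \<in> H2w \<omega>" "b \<in> H2w \<omega>"
  shows "winner \<omega> b a = cnj (winner \<omega> a b)"
proof -
  have "(\<lambda>n. complex_of_real (\<omega> n) * a n * cnj (b n)) sums winner \<omega> a b"
    unfolding winner_def by (rule summable_sums[OF summ[OF assms]])
  then have "(\<lambda>n. cnj (complex_of_real (\<omega> n) * a n * cnj (b n))) sums cnj (winner \<omega> a b)"
    by (simp only: sums_cnj)
  then have "(\<lambda>n. complex_of_real (\<omega> n) * b n * cnj (a n)) sums cnj (winner \<omega> a b)"
    by (simp add: algebra_simps)
  then show ?thesis unfolding winner_def by (rule sums_unique[symmetric])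
qed

lemma winner_add_right:
  assumes "a \<in> H2w \<omega>" "b \<in> H2w \<omega>" "c \<in> H2w \<omega>"
  shows "winner \<omega> c (\<lambda>n. a n + b n) = winner \<omega> c a + winner \<omega> c b"
  using winner_cnj[OF H2w_add[OF assms(1,2)] assms(3)] winner_add_left[OF assms]
    winner_cnj[OF assms(1,3)] winner_cnj[OF assms(2,3)] by simp

lemma winner_diff_right:
  assumes "a \<in> H2w \<omega>" "b \<in> H2w \<omega>" "c \<in> H2w \<omega>"
  shows "winner \<omega> c (\<lambda>n. a n - b n) = winner \<omega> c a - winner \<omega> c b"
  using winner_cnj[OF H2w_diff[OF assms(1,2)] assms(3)] winner_diff_left[OF assms]
    winner_cnj[OF assms(1,3)] winner_cnj[OF assms(2,3)] by simp

lemma winner_scale_right: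
  assumes "a \<in> H2w \<omega>" "b \<in> H2w \<omega>"
  shows "winner \<omega> b (\<lambda>n. k * a n) = cnj k * winner \<omega> b a"
  using winner_cnj[OF H2w_scale[OF assms(1)] assms(2)] winner_scale_left[OF assms]
    winner_cnj[OF assms] by simp

lemma winner_self:
  assumes "a \<in> H2w \<omega>"
  shows "winner \<omega> a a = complex_of_real ((wnorm \<omega> a)\<^sup>2)"
proof -
  have s: "summable (\<lambda>n. \<omega> n * (cmod (a n))\<^sup>2)" using assms by (simp add: H2w_iff)
  have "(\<Sum>n. \<omega> n * (cmod (a n))\<^sup>2) \<ge> 0" by (intro suminf_nonneg[OF s]) (simp add: nn)
  then have "(wnorm \<omega> a)\<^sup>2 = (\<Sum>n. \<omega> n * (cmod (a n))\<^sup>2)" unfolding wnorm_def by simp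
  then have "complex_of_real ((wnorm \<omega> a)\<^sup>2) = (\<Sum>n. complex_of_real (\<omega> n * (cmod (a n))\<^sup>2))"
    using suminf_of_real[OF s] by simp
  also have "\<dots> = winner \<omega> a a" unfolding winner_def
    by (rule suminf_cong) (simp only: of_real_mult complex_norm_square mult.assoc)
  finally show ?thesis by simp
qed

lemma wnorm_nonneg:
  assumes "a \<in> H2w \<omega>" shows "wnorm \<omega> a \<ge> 0"
proof -
  have s: "summable (\<lambda>n. \<omega> n * (cmod (a n))\<^sup>2)" using assms by (simp add: H2w_iff)
  have "(\<Sum>n. \<omega> n * (cmod (a n))\<^sup>2) \<ge> 0" by (intro suminf_nonneg[OF s]) (simp add: nn)
  then show ?thesis unfolding wnorm_def by simp
qed

lemma wnorm_zero:
  assumes "a \<in> H2w \<omega>" "wnorm \<omega> a = 0"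
  shows "a = (\<lambda>n. 0)"
proof -
  have s: "summable (\<lambda>n. \<omega> n * (cmod (a n))\<^sup>2)" using assms by (simp add: H2w_iff)
  have "(\<Sum>n. \<omega> n * (cmod (a n))\<^sup>2) \<ge> 0" by (intro suminf_nonneg[OF s]) (simp add: nn)
  with assms(2) have "(\<Sum>n. \<omega> n * (cmod (a n))\<^sup>2) = 0" unfolding wnorm_def by simp
  then have "\<forall>n. \<omega> n * (cmod (a n))\<^sup>2 = 0" using suminf_eq_zero_iff[OF s] nn by simp
  then show ?thesis using pos by (auto simp: fun_eq_iff) (metis less_irrefl)
qed

lemma winner_self_zero:
  assumes "a \<in> H2w \<omega>" "winner \<omega> a a = 0"
  shows "a = (\<lambda>n. 0)"
  using winner_self[OF assms(1)] assms(2) wnorm_zero[OF assms(1)] by simp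

lemma winner_monom_left: "winner \<omega> (monom_z k) g = \<omega> k * cnj (g k)"
  unfolding winner_def by (subst suminf_finite[of "{k}"]) (auto simp: monom_z_def)

lemma winner_zero_right: "winner \<omega> a (\<lambda>n. 0) = 0"
  unfolding winner_def by simp

end



interpretation one: wt "\<lambda>_. 1::real" by standard simp

typedef ell2 = "H2w (\<lambda>_. 1::real)" morphisms rep Abs_ell2
  by (rule exI[of _ "\<lambda>n. 0"]) (rule one.H2w_zero)

setup_lifting type_definition_ell2

instantiation ell2 :: real_vector
begin
lift_definition zero_ell2 :: ell2 is "\<lambda>n. 0" by (rule one.H2w_zero)
lift_definition plus_ell2 :: "ell2 \<Rightarrow> ell2 \<Rightarrow> ell2" is "\<lambda>a b n. a n + b n" by (rule one.H2w_add)
lift_definition minus_ell2 :: "ell2 \<Rightarrow> ell2 \<Rightarrow> ell2" is "\<lambda>a b n. a n - b n" by (rule one.H2w_diff)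
lift_definition uminus_ell2 :: "ell2 \<Rightarrow> ell2" is "\<lambda>a n. - a n"
  using one.H2w_scale[of _ "-1"] by simp
lift_definition scaleR_ell2 :: "real \<Rightarrow> ell2 \<Rightarrow> ell2" is "\<lambda>r a n. complex_of_real r * a n"
  by (rule one.H2w_scale)
instance by standard (transfer; auto simp: algebra_simps fun_eq_iff)+
end

lemma rep_in: "rep x \<in> H2w (\<lambda>_. 1)" using rep by simp

instantiation ell2 :: real_inner
begin
definition inner_ell2 :: "ell2 \<Rightarrow> ell2 \<Rightarrow> real" where
  "inner_ell2 x y = Re (winner (\<lambda>_. 1) (rep x) (rep y))"
definition norm_ell2 :: "ell2 \<Rightarrow> real" where
  "norm_ell2 x = sqrt (inner x x)"
definition sgn_ell2 :: "ell2 \<Rightarrow> ell2" where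
  "sgn_ell2 x = x /\<^sub>R norm x"
definition dist_ell2 :: "ell2 \<Rightarrow> ell2 \<Rightarrow> real" where
  "dist_ell2 x y = norm (x - y)"
definition uniformity_ell2 :: "(ell2 \<times> ell2) filter" where
  "uniformity_ell2 = (INF e\<in>{0 <..}. principal {(x, y). dist x y < e})"
definition open_ell2 :: "ell2 set \<Rightarrow> bool" where
  "open_ell2 U \<longleftrightarrow> (\<forall>x\<in>U. eventually (\<lambda>(x', y). x' = x \<longrightarrow> y \<in> U) uniformity)"
instance
proof
  fix x y z :: ell2 and r :: real
  show "inner x y = inner y x" unfolding inner_ell2_def
    using one.winner_cnj[OF rep_in rep_in, of x y] by simp
  show "inner (x + y) z = inner x z + inner y z" unfolding inner_ell2_def plus_ell2.rep_eq
    using one.winner_add_left[OF rep_in rep_in rep_in] by simp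
  show "inner (r *\<^sub>R x) y = r * inner x y" unfolding inner_ell2_def scaleR_ell2.rep_eq
    using one.winner_scale_left[OF rep_in rep_in] by simp
  show "0 \<le> inner x x" unfolding inner_ell2_def
    using one.winner_self[OF rep_in] by simp
  show "inner x x = 0 \<longleftrightarrow> x = 0"
  proof
    assume "inner x x = 0"
    then have "winner (\<lambda>_. 1) (rep x) (rep x) = 0" unfolding inner_ell2_def
      using one.winner_self[OF rep_in, of x] by simp
    then have "rep x = rep 0" using one.winner_self_zero[OF rep_in] zero_ell2.rep_eq by simp
    then show "x = 0" using rep_inject by blast
  next
    assume "x = 0" then show "inner x x = 0"
      unfolding inner_ell2_def using one.winner_zero_right by (simp add: zero_ell2.rep_eq)
  qed
  show "norm x = sqrt (inner x x)" by (simp add: norm_ell2_def)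
qed (simp_all add: sgn_ell2_def dist_ell2_def uniformity_ell2_def open_ell2_def)
end

lemma norm_ell2_sq: "(norm x)\<^sup>2 = (\<Sum>n. (cmod (rep x n))\<^sup>2)"
proof -
  have "(norm x)\<^sup>2 = inner x x" by (simp add: power2_norm_eq_inner)
  also have "\<dots> = (wnorm (\<lambda>_. 1) (rep x))\<^sup>2" unfolding inner_ell2_def
    using one.winner_self[OF rep_in] by simp
  also have "\<dots> = (\<Sum>n. (cmod (rep x n))\<^sup>2)"
    using one.wnorm_nonneg[OF rep_in] rep_in[of x]
    unfolding wnorm_def H2w_iff
    by (simp add: suminf_nonneg)
  finally show ?thesis .
qed

lemma summ_rep: "summable (\<lambda>n. (cmod (rep x n))\<^sup>2)"
  using rep_in[of x] by (simp add: H2w_iff)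

lemma partial_le: "(\<Sum>n\<in>I. (cmod (rep x n))\<^sup>2) \<le> (norm x)\<^sup>2" if "finite I"
  unfolding norm_ell2_sq by (rule sum_le_suminf[OF summ_rep that]) auto

lemma coord_le: "cmod (rep x n) \<le> norm x"
proof -
  have "(cmod (rep x n))\<^sup>2 \<le> (norm x)\<^sup>2" using partial_le[of "{n}" x] by simp
  then show ?thesis by (simp add: power2_le_iff_abs_le)
qed




lemma rep_diff: "rep (x - y) n = rep x n - rep y n" by (simp add: minus_ell2.rep_eq)

instance ell2 :: complete_space
proof
  fix X :: "nat \<Rightarrow> ell2" assume C: "Cauchy X"
  have coordC: "Cauchy (\<lambda>k. rep (X k) n)" for n
    unfolding Cauchy_def
  proof (intro allI impI)
    fix e :: real assume "e > 0"
    then obtain M where M: "\<forall>m\<ge>M. \<forall>k\<ge>M. dist (X m) (X k) < e" using C unfolding Cauchy_def by blast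
    have "dist (rep (X m) n) (rep (X k) n) < e" if "m \<ge> M" "k \<ge> M" for m k
    proof -
      have "dist (rep (X m) n) (rep (X k) n) = cmod (rep (X m - X k) n)"
        by (simp add: dist_norm rep_diff)
      also have "\<dots> \<le> norm (X m - X k)" by (rule coord_le)
      also have "\<dots> < e" using M that by (simp add: dist_norm)
      finally show ?thesis .
    qed
    then show "\<exists>M. \<forall>m\<ge>M. \<forall>k\<ge>M. dist (rep (X m) n) (rep (X k) n) < e" by blast
  qed
  define a where "a n = lim (\<lambda>k. rep (X k) n)" for n
  have conv: "(\<lambda>k. rep (X k) n) \<longlonglongrightarrow> a n" for n
    using Cauchy_convergent[OF coordC] unfolding a_def by (simp add: convergent_LIMSEQ_iff)
  have key: "\<exists>N. \<forall>k\<ge>N. (\<lambda>n. a n - rep (X k) n) \<in> H2w (\<lambda>_. 1) \<and>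
      (\<Sum>n. (cmod (a n - rep (X k) n))\<^sup>2) \<le> e\<^sup>2" if "e > 0" for e
  proof -
    obtain N where N: "\<forall>m\<ge>N. \<forall>k\<ge>N. dist (X m) (X k) < e" using C \<open>e > 0\<close> unfolding Cauchy_def by blast
    have "(\<lambda>n. a n - rep (X k) n) \<in> H2w (\<lambda>_. 1) \<and> (\<Sum>n. (cmod (a n - rep (X k) n))\<^sup>2) \<le> e\<^sup>2"
      if "k \<ge> N" for k
    proof -
      have part: "(\<Sum>n<L. (cmod (a n - rep (X k) n))\<^sup>2) \<le> e\<^sup>2" for L
      proof (rule LIMSEQ_le_const2)
        show "(\<lambda>j. \<Sum>n<L. (cmod (rep (X j) n - rep (X k) n))\<^sup>2) \<longlonglongrightarrow> (\<Sum>n<L. (cmod (a n - rep (X k) n))\<^sup>2)"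
          by (intro tendsto_intros conv)
        have "(\<Sum>n<L. (cmod (rep (X j) n - rep (X k) n))\<^sup>2) \<le> e\<^sup>2" if "j \<ge> N" for j
        proof -
          have "(\<Sum>n<L. (cmod (rep (X j) n - rep (X k) n))\<^sup>2) = (\<Sum>n<L. (cmod (rep (X j - X k) n))\<^sup>2)"
            by (simp add: rep_diff)
          also have "\<dots> \<le> (norm (X j - X k))\<^sup>2" by (rule partial_le) simp
          also have "\<dots> \<le> e\<^sup>2" using N that \<open>k \<ge> N\<close> by (intro power_mono) (auto simp: dist_norm less_imp_le)
          finally show ?thesis .
        qed
        then show "\<exists>N. \<forall>j\<ge>N. (\<Sum>n<L. (cmod (rep (X j) n - rep (X k) n))\<^sup>2) \<le> e\<^sup>2" by blast
      qed
      have s: "summable (\<lambda>n. (cmod (a n - rep (X k) n))\<^sup>2)"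
        by (rule bounded_imp_summable[where B="e\<^sup>2"]) (use part[of "Suc _"] in \<open>auto simp: lessThan_Suc_atMost\<close>)
      have "(\<Sum>n. (cmod (a n - rep (X k) n))\<^sup>2) \<le> e\<^sup>2" by (rule suminf_le_const[OF s part])
      with s show ?thesis by (simp add: H2w_iff)
    qed
    then show ?thesis by blast
  qed
  obtain N1 where N1: "(\<lambda>n. a n - rep (X N1) n) \<in> H2w (\<lambda>_. 1)" using key[of 1] by auto
  have aH: "a \<in> H2w (\<lambda>_. 1)" using one.H2w_add[OF N1 rep_in[of "X N1"]] by simp
  have repL: "rep (Abs_ell2 a) = a" using Abs_ell2_inverse[OF aH] .
  have "X \<longlonglongrightarrow> Abs_ell2 a"
  proof (rule metric_LIMSEQ_I)
    fix r :: real assume "r > 0"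
    then obtain N where N: "\<forall>k\<ge>N. (\<Sum>n. (cmod (a n - rep (X k) n))\<^sup>2) \<le> (r/2)\<^sup>2"
      using key[of "r/2"] by auto
    have "dist (X k) (Abs_ell2 a) < r" if "k \<ge> N" for k
    proof -
      have "(dist (X k) (Abs_ell2 a))\<^sup>2 = (\<Sum>n. (cmod (rep (X k) n - a n))\<^sup>2)"
        by (simp add: dist_norm norm_ell2_sq rep_diff repL)
      also have "\<dots> = (\<Sum>n. (cmod (a n - rep (X k) n))\<^sup>2)" by (simp add: norm_minus_commute)
      also have "\<dots> \<le> (r/2)\<^sup>2" using N that by simp
      finally have "dist (X k) (Abs_ell2 a) \<le> r/2"
        using \<open>r > 0\<close> by (simp add: power2_le_iff_abs_le)
      then show ?thesis using \<open>r > 0\<close> by simp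
    qed
    then show "\<exists>no. \<forall>n\<ge>no. dist (X n) (Abs_ell2 a) < r" by blast
  qed
  then show "convergent X" unfolding convergent_def by blast
qed




lemma parallelogram:
  fixes a b :: "'a::real_inner"
  shows "(norm (a + b))\<^sup>2 + (norm (a - b))\<^sup>2 = 2 * (norm a)\<^sup>2 + 2 * (norm b)\<^sup>2"
  by (simp add: power2_norm_eq_inner inner_add_left inner_add_right inner_diff_left
      inner_diff_right inner_commute)

lemma norm_sub_scale_sq:
  fixes y s :: "'a::real_inner"
  shows "(norm (y - t *\<^sub>R s))\<^sup>2 = (norm y)\<^sup>2 - 2 * t * inner y s + t\<^sup>2 * (norm s)\<^sup>2"
  unfolding power2_norm_eq_inner
  by (simp add: inner_diff_left inner_diff_right inner_commute power2_eq_square algebra_simps)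

lemma proj_exists:
  fixes S :: "'a::{real_inner, complete_space} set"
  assumes cl: "closed S" and z: "0 \<in> S" and ad: "\<And>a b. a \<in> S \<Longrightarrow> b \<in> S \<Longrightarrow> a + b \<in> S"
    and sc: "\<And>r a. a \<in> S \<Longrightarrow> r *\<^sub>R a \<in> S"
  shows "\<exists>p\<in>S. \<forall>s\<in>S. inner (x - p) s = 0"
proof -
  define D where "D = (\<lambda>s. (norm (x - s))\<^sup>2) ` S"
  define \<delta> where "\<delta> = Inf D"
  have Dne: "D \<noteq> {}" using z unfolding D_def by auto
  have Dbd: "bdd_below D" unfolding D_def by (rule bdd_belowI[of _ 0]) auto
  have low: "\<delta> \<le> (norm (x - s))\<^sup>2" if "s \<in> S" for s
    unfolding \<delta>_def by (rule cInf_lower[OF _ Dbd]) (use that in \<open>auto simp: D_def\<close>)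
  have "\<exists>s\<in>S. (norm (x - s))\<^sup>2 < \<delta> + 1 / Suc k" for k
  proof -
    have "Inf D < \<delta> + 1 / Suc k" unfolding \<delta>_def by simp
    from cInf_lessD[OF Dne this] show ?thesis unfolding D_def by auto
  qed
  then obtain sq where sqS: "\<And>k. sq k \<in> S" and sqd: "\<And>k. (norm (x - sq k))\<^sup>2 < \<delta> + 1 / Suc k"
    by metis
  have close: "(norm (sq j - sq k))\<^sup>2 \<le> 2 / Suc j + 2 / Suc k" for j k
  proof -
    have m: "(1/2) *\<^sub>R (sq j + sq k) \<in> S" using sqS ad sc by blast
    have "(x - sq j) + (x - sq k) = 2 *\<^sub>R (x - (1/2) *\<^sub>R (sq j + sq k))"
      by (simp add: algebra_simps scaleR_2)
    then have "(norm ((x - sq j) + (x - sq k)))\<^sup>2 = 4 * (norm (x - (1/2) *\<^sub>R (sq j + sq k)))\<^sup>2"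
      by (simp add: power2_eq_square)
    then have a: "(norm ((x - sq j) + (x - sq k)))\<^sup>2 \<ge> 4 * \<delta>" using low[OF m] by simp
    have "(x - sq j) - (x - sq k) = sq k - sq j" by simp
    then have "(norm (sq j - sq k))\<^sup>2 = 2 * (norm (x - sq j))\<^sup>2 + 2 * (norm (x - sq k))\<^sup>2
        - (norm ((x - sq j) + (x - sq k)))\<^sup>2"
      using parallelogram[of "x - sq j" "x - sq k"] by (simp add: norm_minus_commute)
    then show ?thesis using a sqd[of j] sqd[of k] by simp
  qed
  have "Cauchy sq"
    unfolding Cauchy_def
  proof (intro allI impI)
    fix e :: real assume "e > 0"
    obtain N :: nat where N: "4 / e\<^sup>2 < N" using reals_Archimedean2 by blast
    have "dist (sq m) (sq n) < e" if "m \<ge> N" "n \<ge> N" for m n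
    proof -
      have e2: "e\<^sup>2 > 0" using \<open>e > 0\<close> by simp
      have "2 / Suc m \<le> 2 / Suc N" "2 / Suc n \<le> 2 / Suc N" using that
        by (auto intro!: divide_left_mono)
      then have "(dist (sq m) (sq n))\<^sup>2 \<le> 4 / Suc N"
        using close[of m n] by (simp add: dist_norm)
      also have "\<dots> < e\<^sup>2"
      proof -
        have "4 / e\<^sup>2 < Suc N" using N by simp
        then have "4 < Suc N * e\<^sup>2" using e2 by (simp add: divide_less_eq)
        then show ?thesis by (simp add: divide_less_eq mult.commute)
      qed
      finally show ?thesis using \<open>e > 0\<close> by (simp add: power2_less_imp_less[of _ e] less_imp_le)
    qed
    then show "\<exists>M. \<forall>m\<ge>M. \<forall>n\<ge>M. dist (sq m) (sq n) < e" by blast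
  qed
  then obtain p where lim: "sq \<longlonglongrightarrow> p" using Cauchy_convergent_iff convergent_def by blast
  have pS: "p \<in> S" by (rule closed_sequentially[OF cl sqS lim])
  have pmin: "(norm (x - p))\<^sup>2 \<le> \<delta>"
  proof (rule LIMSEQ_le)
    show "(\<lambda>k. (norm (x - sq k))\<^sup>2) \<longlonglongrightarrow> (norm (x - p))\<^sup>2" by (intro tendsto_intros lim)
    have "(\<lambda>k. \<delta> + 1 / real (Suc k)) \<longlonglongrightarrow> \<delta> + 0"
      by (intro tendsto_intros LIMSEQ_Suc[OF lim_inverse_n'])
    then show "(\<lambda>k. \<delta> + 1 / real (Suc k)) \<longlonglongrightarrow> \<delta>" by simp
    show "\<exists>N. \<forall>n\<ge>N. (norm (x - sq n))\<^sup>2 \<le> \<delta> + 1 / real (Suc n)"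
      using sqd less_imp_le by blast
  qed
  have "inner (x - p) s = 0" if sS: "s \<in> S" for s
  proof (cases "s = 0")
    case True then show ?thesis by simp
  next
    case False
    define t where "t = inner (x - p) s / (norm s)\<^sup>2"
    have ns: "(norm s)\<^sup>2 > 0" using False by simp
    have "p + t *\<^sub>R s \<in> S" using ad[OF pS sc[OF sS]] .
    then have "(norm (x - p))\<^sup>2 \<le> (norm (x - (p + t *\<^sub>R s)))\<^sup>2" using low pmin by (meson order_trans)
    also have "x - (p + t *\<^sub>R s) = (x - p) - t *\<^sub>R s" by simp
    finally have "0 \<le> - 2 * t * inner (x - p) s + t\<^sup>2 * (norm s)\<^sup>2"
      unfolding norm_sub_scale_sq by simp
    also have "\<dots> = - (inner (x - p) s)\<^sup>2 / (norm s)\<^sup>2"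
      unfolding t_def using ns by (simp add: power2_eq_square field_simps)
    finally have "(inner (x - p) s)\<^sup>2 / (norm s)\<^sup>2 \<le> 0" by linarith
    then have "(inner (x - p) s)\<^sup>2 \<le> 0" using ns
      by (metis divide_le_0_iff not_less zero_le_power2)
    then show ?thesis by simp
  qed
  with pS show ?thesis by blast
qed




context wt begin

definition J :: "(nat \<Rightarrow> complex) \<Rightarrow> ell2" where
  "J a = Abs_ell2 (\<lambda>n. complex_of_real (sqrt (\<omega> n)) * a n)"

lemma sq_w: "sqrt (\<omega> n) * sqrt (\<omega> n) = \<omega> n" using nn[of n] by simp

lemma Jin: "a \<in> H2w \<omega> \<Longrightarrow> (\<lambda>n. complex_of_real (sqrt (\<omega> n)) * a n) \<in> H2w (\<lambda>_. 1)"
  unfolding H2w_iff using nn by (simp add: norm_mult power_mult_distrib)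

lemma repJ: "a \<in> H2w \<omega> \<Longrightarrow> rep (J a) = (\<lambda>n. complex_of_real (sqrt (\<omega> n)) * a n)"
  unfolding J_def by (rule Abs_ell2_inverse) (simp add: Jin)

lemma winnerJ:
  assumes "a \<in> H2w \<omega>" "b \<in> H2w \<omega>"
  shows "winner (\<lambda>_. 1) (rep (J a)) (rep (J b)) = winner \<omega> a b"
  unfolding winner_def repJ[OF assms(1)] repJ[OF assms(2)]
proof (rule suminf_cong)
  fix n
  have "complex_of_real (sqrt (\<omega> n)) * complex_of_real (sqrt (\<omega> n)) = complex_of_real (\<omega> n)"
    by (simp only: of_real_mult[symmetric] sq_w)
  then show "complex_of_real 1 * (complex_of_real (sqrt (\<omega> n)) * a n) *
      cnj (complex_of_real (sqrt (\<omega> n)) * b n) = complex_of_real (\<omega> n) * a n * cnj (b n)"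
    by (simp add: algebra_simps)
qed

lemma innerJ: "a \<in> H2w \<omega> \<Longrightarrow> b \<in> H2w \<omega> \<Longrightarrow> inner (J a) (J b) = Re (winner \<omega> a b)"
  by (simp add: inner_ell2_def winnerJ)

lemma normJ: "a \<in> H2w \<omega> \<Longrightarrow> norm (J a) = wnorm \<omega> a"
  by (simp add: norm_ell2_def innerJ winner_self wnorm_nonneg)

lemma J_eqI: "rep x = rep y \<Longrightarrow> x = y" using rep_inject by blast

lemma J_add: "a \<in> H2w \<omega> \<Longrightarrow> b \<in> H2w \<omega> \<Longrightarrow> J (\<lambda>n. a n + b n) = J a + J b"
  by (rule J_eqI) (simp add: plus_ell2.rep_eq repJ H2w_add algebra_simps)

lemma J_diff: "a \<in> H2w \<omega> \<Longrightarrow> b \<in> H2w \<omega> \<Longrightarrow> J (\<lambda>n. a n - b n) = J a - J b"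
  by (rule J_eqI) (simp add: minus_ell2.rep_eq repJ H2w_diff algebra_simps)

lemma J_scale: "a \<in> H2w \<omega> \<Longrightarrow> J (\<lambda>n. complex_of_real r * a n) = r *\<^sub>R J a"
  by (rule J_eqI) (simp add: scaleR_ell2.rep_eq repJ H2w_scale algebra_simps)

lemma J_zero: "J (\<lambda>n. 0) = 0"
  by (rule J_eqI) (simp add: zero_ell2.rep_eq repJ H2w_zero)

lemma J_onto: "\<exists>a\<in>H2w \<omega>. y = J a"
proof -
  define a where "a n = rep y n / complex_of_real (sqrt (\<omega> n))" for n
  have e: "(\<lambda>n. complex_of_real (sqrt (\<omega> n)) * a n) = rep y"
    using pos by (auto simp: a_def fun_eq_iff) (metis less_irrefl)
  have aH: "a \<in> H2w \<omega>"
  proof -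
    have "summable (\<lambda>n. (cmod (rep y n))\<^sup>2)" by (rule summ_rep)
    also have "(\<lambda>n. (cmod (rep y n))\<^sup>2) = (\<lambda>n. \<omega> n * (cmod (a n))\<^sup>2)"
      using nn by (auto simp: fun_eq_iff e[symmetric] norm_mult power_mult_distrib)
    finally show ?thesis by (simp add: H2w_iff)
  qed
  have "J a = y" by (rule J_eqI) (simp add: repJ[OF aH] e)
  with aH show ?thesis by blast
qed

lemma J_inj: "a \<in> H2w \<omega> \<Longrightarrow> b \<in> H2w \<omega> \<Longrightarrow> J a = J b \<Longrightarrow> a = b"
  using pos by (auto simp: fun_eq_iff dest!: arg_cong[where f=rep] simp: repJ) (metis less_irrefl)

lemma proj_char:
  assumes M: "closed_subspace \<omega> M" and x: "x \<in> H2w \<omega>"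
  shows "\<exists>p. p \<in> M \<and> (\<lambda>n. x n - p n) \<in> orth_compl \<omega> M"
proof -
  have MH: "M \<subseteq> H2w \<omega>" and M0: "(\<lambda>n. 0) \<in> M"
    and Madd: "\<And>a b. a \<in> M \<Longrightarrow> b \<in> M \<Longrightarrow> (\<lambda>n. a n + b n) \<in> M"
    and Msc: "\<And>c a. a \<in> M \<Longrightarrow> (\<lambda>n. c * a n) \<in> M"
    and Mcl: "\<And>g y. (\<forall>k. g k \<in> M) \<Longrightarrow> y \<in> H2w \<omega> \<Longrightarrow>
        (\<lambda>k. wnorm \<omega> (\<lambda>n. g k n - y n)) \<longlonglongrightarrow> 0 \<Longrightarrow> y \<in> M"
    using M unfolding closed_subspace_def by blast+
  define S where "S = J ` M"
  have "closed S"
    unfolding closed_sequential_limits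
  proof (intro allI impI, elim conjE)
    fix ys l assume ys: "\<forall>n. ys n \<in> S" and lim: "ys \<longlonglongrightarrow> l"
    have "\<forall>k. \<exists>m. m \<in> M \<and> ys k = J m" using ys unfolding S_def by blast
    then obtain g where g: "\<forall>k. g k \<in> M \<and> ys k = J (g k)" using choice[of "\<lambda>k m. m \<in> M \<and> ys k = J m"] by blast
    obtain y where y: "y \<in> H2w \<omega>" "l = J y" using J_onto by blast
    have gH: "g k \<in> H2w \<omega>" for k using g MH by blast
    have "(\<lambda>k. norm (ys k - l)) \<longlonglongrightarrow> 0"
      by (intro tendsto_norm_zero LIM_zero lim)
    moreover have "norm (ys k - l) = wnorm \<omega> (\<lambda>n. g k n - y n)" for k
    proof -
      have "ys k - l = J (\<lambda>n. g k n - y n)" using g y(2) J_diff[OF gH y(1)] by simp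
      then show ?thesis using normJ[OF H2w_diff[OF gH y(1)]] by simp
    qed
    ultimately have "(\<lambda>k. wnorm \<omega> (\<lambda>n. g k n - y n)) \<longlonglongrightarrow> 0" by simp
    then have "y \<in> M" using Mcl[of g y] g y(1) by blast
    then show "l \<in> S" using y(2) unfolding S_def by blast
  qed
  moreover have "0 \<in> S" unfolding S_def using M0 J_zero by (metis image_eqI)
  moreover have "a + b \<in> S" if ab0: "a \<in> S" "b \<in> S" for a b
  proof -
    obtain a' b' where ab: "a' \<in> M" "b' \<in> M" "a = J a'" "b = J b'" using ab0 unfolding S_def by blast
    have "a' \<in> H2w \<omega>" "b' \<in> H2w \<omega>" using ab(1,2) MH by auto
    then have "a + b = J (\<lambda>n. a' n + b' n)" using J_add ab(3,4) by simp
    then show ?thesis using Madd[OF ab(1,2)] unfolding S_def by blast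
  qed
  moreover have "r *\<^sub>R a \<in> S" if a0: "a \<in> S" for r a
  proof -
    obtain a' where ab: "a' \<in> M" "a = J a'" using a0 unfolding S_def by blast
    have "a' \<in> H2w \<omega>" using ab(1) MH by auto
    then have "r *\<^sub>R a = J (\<lambda>n. complex_of_real r * a' n)" using J_scale ab(2) by simp
    then show ?thesis using Msc[OF ab(1)] unfolding S_def by blast
  qed
  ultimately obtain q where q: "q \<in> S" "\<forall>s\<in>S. inner (J x - q) s = 0"
    using proj_exists[of S "J x"] by blast
  obtain p where p: "p \<in> M" "q = J p" using q(1) unfolding S_def by blast
  have pH: "p \<in> H2w \<omega>" using p MH by blast
  have dH: "(\<lambda>n. x n - p n) \<in> H2w \<omega>" by (rule H2w_diff[OF x pH])
  have "winner \<omega> (\<lambda>n. x n - p n) m = 0" if m: "m \<in> M" for m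
  proof -
    have mH: "m \<in> H2w \<omega>" using m MH by blast
    have imH: "(\<lambda>n. \<i> * m n) \<in> H2w \<omega>" using H2w_scale[OF mH] .
    have Jd: "J x - q = J (\<lambda>n. x n - p n)" using J_diff[OF x pH] p(2) by simp
    have "inner (J x - q) (J m) = 0" using q(2) m unfolding S_def by blast
    then have "Re (winner \<omega> (\<lambda>n. x n - p n) m) = 0" using innerJ[OF dH mH] Jd by simp
    moreover have "inner (J x - q) (J (\<lambda>n. \<i> * m n)) = 0" using q(2) Msc[OF m, of \<i>] unfolding S_def by blast
    then have "Re (winner \<omega> (\<lambda>n. x n - p n) (\<lambda>n. \<i> * m n)) = 0" using innerJ[OF dH imH] Jd by simp
    then have "Im (winner \<omega> (\<lambda>n. x n - p n) m) = 0"
      by (simp add: winner_scale_right[OF mH dH])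
    ultimately show ?thesis by (simp add: complex_eq_iff)
  qed
  with p dH show ?thesis unfolding orth_compl_def by blast
qed

lemma proj_unique:
  assumes M: "closed_subspace \<omega> M" and x: "x \<in> H2w \<omega>"
    and p: "p \<in> M" "(\<lambda>n. x n - p n) \<in> orth_compl \<omega> M"
    and q: "q \<in> M" "(\<lambda>n. x n - q n) \<in> orth_compl \<omega> M"
  shows "p = q"
proof -
  have MH: "M \<subseteq> H2w \<omega>" and Madd: "\<And>a b. a \<in> M \<Longrightarrow> b \<in> M \<Longrightarrow> (\<lambda>n. a n + b n) \<in> M"
    and Msc: "\<And>c a. a \<in> M \<Longrightarrow> (\<lambda>n. c * a n) \<in> M"
    using M unfolding closed_subspace_def by blast+
  have pH: "p \<in> H2w \<omega>" and qH: "q \<in> H2w \<omega>" using p q MH by auto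
  have dM: "(\<lambda>n. p n - q n) \<in> M" using Madd[OF p(1) Msc[OF q(1), of "-1"]] by simp
  have dH: "(\<lambda>n. p n - q n) \<in> H2w \<omega>" using dM MH by blast
  have a: "winner \<omega> (\<lambda>n. x n - p n) (\<lambda>n. p n - q n) = 0" using p(2) dM unfolding orth_compl_def by blast
  have b: "winner \<omega> (\<lambda>n. x n - q n) (\<lambda>n. p n - q n) = 0" using q(2) dM unfolding orth_compl_def by blast
  have "(\<lambda>n. p n - q n) = (\<lambda>n. (x n - q n) - (x n - p n))" by auto
  then have "winner \<omega> (\<lambda>n. p n - q n) (\<lambda>n. p n - q n) = 0"
    using winner_diff_left[OF H2w_diff[OF x qH] H2w_diff[OF x pH] dH] a b by simp
  then have "(\<lambda>n. p n - q n) = (\<lambda>n. 0)" by (rule winner_self_zero[OF dH])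
  then show ?thesis by (auto simp: fun_eq_iff)
qed

lemma proj_spec:
  assumes "closed_subspace \<omega> M" "x \<in> H2w \<omega>"
  shows "proj \<omega> M x \<in> M \<and> (\<lambda>n. x n - proj \<omega> M x n) \<in> orth_compl \<omega> M"
proof -
  have "\<exists>!p. p \<in> M \<and> (\<lambda>n. x n - p n) \<in> orth_compl \<omega> M"
    using proj_char[OF assms] proj_unique[OF assms] by blast
  then show ?thesis unfolding proj_def by (rule theI')
qed

lemma proj_eq:
  assumes "closed_subspace \<omega> M" "x \<in> H2w \<omega>" "p \<in> M" "(\<lambda>n. x n - p n) \<in> orth_compl \<omega> M"
  shows "proj \<omega> M x = p"
  using proj_spec[OF assms(1,2)] proj_unique[OF assms(1,2)] assms(3,4) by blast

end



context wt begin

lemma wcs: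
  assumes a: "a \<in> H2w \<omega>" and b: "b \<in> H2w \<omega>"
  shows "cmod (winner \<omega> a b) \<le> wnorm \<omega> a * wnorm \<omega> b"
proof -
  define A where "A = (\<lambda>n. complex_of_real (cmod (a n)))"
  define B where "B = (\<lambda>n. complex_of_real (cmod (b n)))"
  have AH: "A \<in> H2w \<omega>" using a by (simp add: A_def H2w_iff)
  have BH: "B \<in> H2w \<omega>" using b by (simp add: B_def H2w_iff)
  have wA: "wnorm \<omega> A = wnorm \<omega> a" by (simp add: A_def wnorm_def)
  have wB: "wnorm \<omega> B = wnorm \<omega> b" by (simp add: B_def wnorm_def)
  have "cmod (winner \<omega> a b) \<le> (\<Sum>n. norm (complex_of_real (\<omega> n) * a n * cnj (b n)))"
    unfolding winner_def by (rule summable_norm[OF summ_norm[OF a b]])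
  also have "\<dots> = (\<Sum>n. Re (complex_of_real (\<omega> n) * A n * cnj (B n)))"
    by (rule suminf_cong) (simp add: A_def B_def norm_mult abs_of_nonneg nn)
  also have "\<dots> = Re (winner \<omega> A B)" unfolding winner_def
    by (rule Re_suminf[symmetric, OF summ[OF AH BH]])
  also have "\<dots> = inner (J A) (J B)" by (simp add: innerJ[OF AH BH])
  also have "\<dots> \<le> norm (J A) * norm (J B)" by (rule norm_cauchy_schwarz)
  also have "\<dots> = wnorm \<omega> a * wnorm \<omega> b" by (simp add: normJ AH BH wA wB)
  finally show ?thesis .
qed

lemma zpow_coeff: "(zmul ^^ m) a n = (if m \<le> n then a (n - m) else 0)"
proof (induction m arbitrary: n)
  case 0 then show ?case by simp
next
  case (Suc m) then show ?case
    by (cases n) (auto simp: zmul_def)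
qed

lemma wnorm_swap: "wnorm \<omega> (\<lambda>n. a n - b n) = wnorm \<omega> (\<lambda>n. b n - a n)"
  by (simp add: wnorm_def norm_minus_commute)

end

locale awt = wt +
  fixes C :: real
  assumes Cpos: "C > 0" and Cb: "\<And>n. \<omega> (Suc n) \<le> C * \<omega> n"
begin

lemma zmul_H2w:
  assumes "a \<in> H2w \<omega>" shows "zmul a \<in> H2w \<omega>"
proof -
  have "summable (\<lambda>n. C * (\<omega> n * (cmod (a n))\<^sup>2))"
    using assms by (intro summable_mult) (simp add: H2w_iff)
  then have "summable (\<lambda>n. \<omega> (Suc n) * (cmod (a n))\<^sup>2)"
  proof (rule summable_comparison_test'[where N=0])
    fix n
    have "\<omega> (Suc n) * (cmod (a n))\<^sup>2 \<le> (C * \<omega> n) * (cmod (a n))\<^sup>2"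
      by (rule mult_right_mono[OF Cb]) simp
    then show "norm (\<omega> (Suc n) * (cmod (a n))\<^sup>2) \<le> C * (\<omega> n * (cmod (a n))\<^sup>2)"
      using nn[of "Suc n"] by (simp add: mult.assoc)
  qed
  then have "summable (\<lambda>n. \<omega> (Suc n) * (cmod (zmul a (Suc n)))\<^sup>2)" by (simp add: zmul_def)
  then show ?thesis unfolding H2w_iff by (subst (asm) summable_Suc_iff)
qed

lemma zpow_H2w: "a \<in> H2w \<omega> \<Longrightarrow> (zmul ^^ m) a \<in> H2w \<omega>"
  by (induction m) (auto simp: zmul_H2w)

definition Sa :: "(nat \<Rightarrow> complex) \<Rightarrow> (nat \<Rightarrow> complex)" where
  "Sa h = (\<lambda>n. complex_of_real (\<omega> (Suc n) / \<omega> n) * h (Suc n))"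

lemma Sa_H2w:
  assumes h: "h \<in> H2w \<omega>" shows "Sa h \<in> H2w \<omega>"
proof -
  have "summable (\<lambda>n. \<omega> (Suc n) * (cmod (h (Suc n)))\<^sup>2)"
    using h unfolding H2w_iff by (subst summable_Suc_iff)
  then have s: "summable (\<lambda>n. C * (\<omega> (Suc n) * (cmod (h (Suc n)))\<^sup>2))" by (rule summable_mult)
  have "\<omega> n * (cmod (Sa h n))\<^sup>2 \<le> C * (\<omega> (Suc n) * (cmod (h (Suc n)))\<^sup>2)" for n
  proof -
    have r: "\<omega> (Suc n) / \<omega> n \<le> C" using Cb[of n] pos[of n] by (simp add: divide_le_eq)
    have c: "cmod (Sa h n) = (\<omega> (Suc n) / \<omega> n) * cmod (h (Suc n))"
      using pos[of n] pos[of "Suc n"] by (simp add: Sa_def norm_mult norm_divide)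
    have "\<omega> n * (cmod (Sa h n))\<^sup>2 = (\<omega> (Suc n) / \<omega> n) * (\<omega> (Suc n) * (cmod (h (Suc n)))\<^sup>2)"
      unfolding c using pos[of n] by (simp add: power2_eq_square field_simps)
    also have "\<dots> \<le> C * (\<omega> (Suc n) * (cmod (h (Suc n)))\<^sup>2)"
      by (rule mult_right_mono[OF r]) (simp add: nn)
    finally show ?thesis .
  qed
  then have "summable (\<lambda>n. \<omega> n * (cmod (Sa h n))\<^sup>2)"
    by (intro summable_comparison_test'[OF s, where N=0]) (simp add: nn)
  then show ?thesis by (simp add: H2w_iff)
qed

lemma winner_adj:
  assumes h: "h \<in> H2w \<omega>" and g: "g \<in> H2w \<omega>"
  shows "winner \<omega> (Sa h) g = winner \<omega> h (zmul g)"
proof -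
  let ?f = "\<lambda>n. complex_of_real (\<omega> n) * h n * cnj (zmul g n)"
  have s: "summable ?f" by (rule summ[OF h zmul_H2w[OF g]])
  have "winner \<omega> h (zmul g) = suminf ?f" by (simp add: winner_def)
  also have "\<dots> = (\<Sum>n. ?f (Suc n))" using suminf_split_head[OF s] by (simp add: zmul_def)
  also have "\<dots> = winner \<omega> (Sa h) g" unfolding winner_def Sa_def
  proof (rule suminf_cong)
    fix n
    have e: "complex_of_real (\<omega> n) * complex_of_real (\<omega> (Suc n) / \<omega> n) = complex_of_real (\<omega> (Suc n))"
    proof -
      have e0: "\<omega> n * (\<omega> (Suc n) / \<omega> n) = \<omega> (Suc n)" using pos[of n] by simp
      show ?thesis by (simp only: of_real_mult[symmetric] e0)
    qed
    show "?f (Suc n) = complex_of_real (\<omega> n) * (complex_of_real (\<omega> (Suc n) / \<omega> n) * h (Suc n)) * cnj (g n)"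
      using pos[of n] by (simp add: zmul_def mult.assoc[symmetric] e)
  qed
  finally show ?thesis by simp
qed

end

lemma admissible_bound:
  assumes "admissible_weight \<omega>"
  shows "\<exists>C>0. \<forall>n. \<omega> (Suc n) \<le> C * \<omega> n"
proof -
  have pos: "\<And>n. \<omega> n > 0" and lim: "(\<lambda>n. \<omega> (Suc n) / \<omega> n) \<longlonglongrightarrow> 1"
    using assms by (auto simp: admissible_weight_def)
  have "Bseq (\<lambda>n. \<omega> (Suc n) / \<omega> n)" by (rule convergent_imp_Bseq) (use lim in \<open>auto simp: convergent_def\<close>)
  then obtain K where K: "K > 0" "\<And>n. norm (\<omega> (Suc n) / \<omega> n) \<le> K" unfolding Bseq_def by blast
  have "\<omega> (Suc n) \<le> K * \<omega> n" for n
    using K(2)[of n] pos[of n] pos[of "Suc n"] by (simp add: divide_le_eq)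
  with K(1) show ?thesis by blast
qed




context wt begin

lemma zpow_M:
  assumes "z_invariant M" "p \<in> M" shows "(zmul ^^ m) p \<in> M"
  using assms by (induction m) (auto simp: z_invariant_def)

lemma imp_inner:
  assumes fH: "f \<in> H2w \<omega>" and fn: "wnorm \<omega> f = 1"
    and M: "closed_subspace \<omega> M" and zi: "z_invariant M"
    and below: "\<forall>k<d. monom_z k \<in> orth_compl \<omega> M"
    and fc: "f = (\<lambda>n. c * proj \<omega> M (monom_z d) n)"
  shows "H2w_inner \<omega> f"
proof -
  have MH: "M \<subseteq> H2w \<omega>" using M unfolding closed_subspace_def by blast
  define p where "p = proj \<omega> M (monom_z d)"
  have p: "p \<in> M" "(\<lambda>n. monom_z d n - p n) \<in> orth_compl \<omega> M"
    using proj_spec[OF M H2w_monom] unfolding p_def by auto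
  have pH: "p \<in> H2w \<omega>" using p MH by blast
  have p0: "p k = 0" if "k < d" for k
  proof -
    have "winner \<omega> (monom_z k) p = 0" using below that p(1) unfolding orth_compl_def by blast
    then show ?thesis using pos[of k] by (simp add: winner_monom_left)
  qed
  have "winner \<omega> ((zmul ^^ m) f) f = 0" if m: "m \<ge> 1" for m
  proof -
    define P where "P = (zmul ^^ m) p"
    have PM: "P \<in> M" unfolding P_def by (rule zpow_M[OF zi p(1)])
    have PH: "P \<in> H2w \<omega>" using PM MH by blast
    have "winner \<omega> (\<lambda>n. monom_z d n - p n) P = 0" using p(2) PM unfolding orth_compl_def by blast
    then have "winner \<omega> (monom_z d) P - winner \<omega> p P = 0"
      using winner_diff_left[OF H2w_monom pH PH] by simp
    moreover have "winner \<omega> (monom_z d) P = 0"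
      using m p0[of "d - m"] by (simp add: winner_monom_left P_def zpow_coeff)
    ultimately have wp: "winner \<omega> p P = 0" by simp
    have ef: "(zmul ^^ m) f = (\<lambda>n. c * P n)" unfolding P_def fc p_def[symmetric]
      by (simp add: fun_eq_iff zpow_coeff)
    have "winner \<omega> ((zmul ^^ m) f) f = winner \<omega> (\<lambda>n. c * P n) (\<lambda>n. c * p n)"
      using ef fc p_def by simp
    also have "\<dots> = c * (cnj c * winner \<omega> P p)"
      by (simp add: winner_scale_left[OF PH H2w_scale[OF pH]] winner_scale_right[OF pH PH])
    also have "\<dots> = 0" using winner_cnj[OF pH PH] wp by simp
    finally show ?thesis .
  qed
  then show ?thesis using fH fn unfolding H2w_inner_def by blast
qed

end

context awt begin

lemma inner_imp:
  assumes inn: "H2w_inner \<omega> f"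
  shows "\<exists>M d. closed_subspace \<omega> M \<and> z_invariant M \<and> M \<noteq> {(\<lambda>n. 0)} \<and>
       (\<forall>k<d. monom_z k \<in> orth_compl \<omega> M) \<and> monom_z d \<notin> orth_compl \<omega> M \<and>
       (\<exists>c::complex. f = (\<lambda>n. c * proj \<omega> M (monom_z d) n))"
proof -
  have fH: "f \<in> H2w \<omega>" and fn: "wnorm \<omega> f = 1"
    and orth: "\<And>m. m \<ge> 1 \<Longrightarrow> winner \<omega> ((zmul ^^ m) f) f = 0"
    using inn unfolding H2w_inner_def by auto
  define Z where "Z m = (zmul ^^ m) f" for m
  have ZH: "Z m \<in> H2w \<omega>" for m unfolding Z_def by (rule zpow_H2w[OF fH])
  have Zc: "Z m n = (if m \<le> n then f (n - m) else 0)" for m n unfolding Z_def by (rule zpow_coeff)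
  have ff: "winner \<omega> f f = 1" using winner_self[OF fH] fn by simp
  have fnz: "f \<noteq> (\<lambda>n. 0)"
  proof
    assume "f = (\<lambda>n. 0)"
    then have "winner \<omega> f f = 0" by (simp add: winner_zero_right)
    with ff show False by simp
  qed
  then obtain n0 where "f n0 \<noteq> 0" by auto
  define d where "d = (LEAST n. f n \<noteq> 0)"
  have fd: "f d \<noteq> 0" unfolding d_def by (rule LeastI) (rule \<open>f n0 \<noteq> 0\<close>)
  have fbelow: "f k = 0" if "k < d" for k using not_less_Least[OF that[unfolded d_def]] by simp
  define M where "M = {g \<in> H2w \<omega>. \<forall>h. h \<in> H2w \<omega> \<longrightarrow> (\<forall>m. winner \<omega> h (Z m) = 0) \<longrightarrow> winner \<omega> h g = 0}"
  have Mi: "winner \<omega> h g = 0" if "g \<in> M" "h \<in> H2w \<omega>" "\<And>m. winner \<omega> h (Z m) = 0" for g h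
    using that unfolding M_def by blast
  have MH: "M \<subseteq> H2w \<omega>" unfolding M_def by blast
  have fM: "f \<in> M" unfolding M_def using fH by (auto dest: spec[of _ 0] simp: Z_def)
  have cs: "closed_subspace \<omega> M"
    unfolding closed_subspace_def
  proof (intro conjI allI ballI impI)
    show "M \<subseteq> H2w \<omega>" by (rule MH)
    show "(\<lambda>n. 0) \<in> M" unfolding M_def by (simp add: H2w_zero winner_zero_right)
  next
    fix a b assume a: "a \<in> M" and b: "b \<in> M"
    have aH: "a \<in> H2w \<omega>" and bH: "b \<in> H2w \<omega>" using a b MH by auto
    show "(\<lambda>n. a n + b n) \<in> M" unfolding M_def
      using H2w_add[OF aH bH] winner_add_right[OF aH bH] Mi[OF a] Mi[OF b] by auto
  next
    fix c :: complex and a assume a: "a \<in> M"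
    have aH: "a \<in> H2w \<omega>" using a MH by auto
    show "(\<lambda>n. c * a n) \<in> M" unfolding M_def
      using H2w_scale[OF aH] winner_scale_right[OF aH] Mi[OF a] by auto
  next
    fix g x assume as: "(\<forall>k. g k \<in> M) \<and> x \<in> H2w \<omega> \<and> (\<lambda>k. wnorm \<omega> (\<lambda>n. g k n - x n)) \<longlonglongrightarrow> 0"
    then have gM: "\<And>k. g k \<in> M" and xH: "x \<in> H2w \<omega>"
      and lim: "(\<lambda>k. wnorm \<omega> (\<lambda>n. g k n - x n)) \<longlonglongrightarrow> 0" by auto
    have gH: "g k \<in> H2w \<omega>" for k using gM MH by auto
    have "winner \<omega> h x = 0" if hH: "h \<in> H2w \<omega>" and hz: "\<And>m. winner \<omega> h (Z m) = 0" for h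
    proof -
      have bnd: "cmod (winner \<omega> h x) \<le> wnorm \<omega> h * wnorm \<omega> (\<lambda>n. g k n - x n)" for k
      proof -
        have "winner \<omega> h (\<lambda>n. x n - g k n) = winner \<omega> h x - winner \<omega> h (g k)"
          by (rule winner_diff_right[OF xH gH hH])
        also have "winner \<omega> h (g k) = 0" by (rule Mi[OF gM hH hz])
        finally have "winner \<omega> h x = winner \<omega> h (\<lambda>n. x n - g k n)" by simp
        also have "cmod \<dots> \<le> wnorm \<omega> h * wnorm \<omega> (\<lambda>n. x n - g k n)"
          by (rule wcs[OF hH H2w_diff[OF xH gH]])
        finally show ?thesis by (simp add: wnorm_swap)
      qed
      have "(\<lambda>k. wnorm \<omega> h * wnorm \<omega> (\<lambda>n. g k n - x n)) \<longlonglongrightarrow> wnorm \<omega> h * 0"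
        by (intro tendsto_intros lim)
      then have "cmod (winner \<omega> h x) \<le> 0"
        using bnd by (intro LIMSEQ_le[OF tendsto_const]) auto
      then show ?thesis by simp
    qed
    then show "x \<in> M" unfolding M_def using xH by blast
  qed
  have zi: "z_invariant M"
    unfolding z_invariant_def
  proof
    fix g assume g: "g \<in> M"
    have gH: "g \<in> H2w \<omega>" using g MH by auto
    have "winner \<omega> h (zmul g) = 0" if hH: "h \<in> H2w \<omega>" and hz: "\<forall>m. winner \<omega> h (Z m) = 0" for h
    proof -
      have "winner \<omega> (Sa h) (Z m) = 0" for m
      proof -
        have "zmul (Z m) = Z (Suc m)" by (simp add: Z_def)
        then show ?thesis using winner_adj[OF hH ZH[of m]] hz by simp
      qed
      then have "winner \<omega> (Sa h) g = 0" by (rule Mi[OF g Sa_H2w[OF hH]])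
      then show ?thesis using winner_adj[OF hH gH] by simp
    qed
    then show "zmul g \<in> M" unfolding M_def using zmul_H2w[OF gH] by blast
  qed
  have nz: "M \<noteq> {(\<lambda>n. 0)}" using fM fnz by blast
  have bel: "\<forall>k<d. monom_z k \<in> orth_compl \<omega> M"
  proof (intro allI impI)
    fix k assume k: "k < d"
    have "winner \<omega> (monom_z k) g = 0" if "g \<in> M" for g
    proof (rule Mi[OF that H2w_monom])
      fix m show "winner \<omega> (monom_z k) (Z m) = 0"
        using k fbelow[of "k - m"] by (simp add: winner_monom_left Zc)
    qed
    then show "monom_z k \<in> orth_compl \<omega> M" unfolding orth_compl_def using H2w_monom by blast
  qed
  define a where "a = complex_of_real (\<omega> d) * cnj (f d)"
  have anz: "a \<noteq> 0" using fd pos[of d] unfolding a_def by simp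
  have wdf: "winner \<omega> (monom_z d) f = a" by (simp add: winner_monom_left a_def)
  have ndM: "monom_z d \<notin> orth_compl \<omega> M" using fM wdf anz unfolding orth_compl_def by auto
  define p where "p = (\<lambda>n. a * f n)"
  have pH: "p \<in> H2w \<omega>" unfolding p_def by (rule H2w_scale[OF fH])
  have pM: "p \<in> M" using cs fM unfolding closed_subspace_def p_def by blast
  have dH: "(\<lambda>n. monom_z d n - p n) \<in> H2w \<omega>" by (rule H2w_diff[OF H2w_monom pH])
  have "winner \<omega> (\<lambda>n. monom_z d n - p n) g = 0" if g: "g \<in> M" for g
  proof (rule Mi[OF g dH])
    fix m
    have e: "winner \<omega> (\<lambda>n. monom_z d n - p n) (Z m) = winner \<omega> (monom_z d) (Z m) - a * winner \<omega> f (Z m)"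
      using winner_diff_left[OF H2w_monom pH ZH] winner_scale_left[OF fH ZH] unfolding p_def by simp
    show "winner \<omega> (\<lambda>n. monom_z d n - p n) (Z m) = 0"
    proof (cases "m = 0")
      case True
      then show ?thesis unfolding e using wdf ff by (simp add: Z_def)
    next
      case False
      have "winner \<omega> (monom_z d) (Z m) = 0"
        using False fbelow[of "d - m"] by (simp add: winner_monom_left Zc)
      moreover have "winner \<omega> f (Z m) = 0"
        using winner_cnj[OF ZH fH, of m] orth[of m] False by (simp add: Z_def)
      ultimately show ?thesis unfolding e by simp
    qed
  qed
  then have "(\<lambda>n. monom_z d n - p n) \<in> orth_compl \<omega> M" unfolding orth_compl_def using dH by blast
  then have pe: "proj \<omega> M (monom_z d) = p" by (rule proj_eq[OF cs H2w_monom pM])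
  have "f = (\<lambda>n. inverse a * proj \<omega> M (monom_z d) n)"
    unfolding pe p_def using anz by (simp add: fun_eq_iff)
  then show ?thesis using cs zi nz bel ndM by blast
qed

end

theorem mainTheorem1:
  fixes \<omega> :: "nat \<Rightarrow> real" and f :: "nat \<Rightarrow> complex"
  assumes "admissible_weight \<omega>"
    and "f \<in> H2w \<omega>" and "wnorm \<omega> f = 1"
  shows "H2w_inner \<omega> f \<longleftrightarrow>
    (\<exists>M d. closed_subspace \<omega> M \<and> z_invariant M \<and> M \<noteq> {(\<lambda>n. 0)} \<and>
       (\<forall>k<d. monom_z k \<in> orth_compl \<omega> M) \<and> monom_z d \<notin> orth_compl \<omega> M \<and>
       (\<exists>c::complex. f = (\<lambda>n. c * proj \<omega> M (monom_z d) n)))"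
proof -
  have pos: "\<And>n. \<omega> n > 0" using assms(1) by (simp add: admissible_weight_def)
  obtain C where C: "C > 0" "\<And>n. \<omega> (Suc n) \<le> C * \<omega> n" using admissible_bound[OF assms(1)] by blast
  interpret awt \<omega> C by standard (use pos C in auto)
  show ?thesis
  proof
    assume "H2w_inner \<omega> f" then show "\<exists>M d. closed_subspace \<omega> M \<and> z_invariant M \<and> M \<noteq> {(\<lambda>n. 0)} \<and>
       (\<forall>k<d. monom_z k \<in> orth_compl \<omega> M) \<and> monom_z d \<notin> orth_compl \<omega> M \<and>
       (\<exists>c::complex. f = (\<lambda>n. c * proj \<omega> M (monom_z d) n))" by (rule inner_imp)
  next
    assume "\<exists>M d. closed_subspace \<omega> M \<and> z_invariant M \<and> M \<noteq> {(\<lambda>n. 0)} \<and>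
       (\<forall>k<d. monom_z k \<in> orth_compl \<omega> M) \<and> monom_z d \<notin> orth_compl \<omega> M \<and>
       (\<exists>c::complex. f = (\<lambda>n. c * proj \<omega> M (monom_z d) n))"
    then obtain M d c where "closed_subspace \<omega> M" "z_invariant M"
      "\<forall>k<d. monom_z k \<in> orth_compl \<omega> M" "f = (\<lambda>n. c * proj \<omega> M (monom_z d) n)" by blast
    then show "H2w_inner \<omega> f" using imp_inner assms(2,3) by blast
  qed
qed


end
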